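(* Let $E^*$ be an $s$-$t$ path maximizing $\Lambda(\cdot,P)$ over all directed $s$-$t$ paths, with $d$ edges, and let $b=\max_i|E_2\cap p_i|$. If the initial recursion depth satisfies $I\ge\lceil\log d\rceil$, then the Extended Recursive Greedy algorithm returns an $s$-$t$ path $E_{\mathbf{f}}$ with $\Lambda(E_{\mathbf{f}},P)\ge\frac{1}{(b+1)(\lceil\log d\rceil+1)}\Lambda(E^*,P)$. (Logarithms are base 2.)
   Context: $G=(V,E)$ is a simple directed acyclic graph with capacities $C\in\mathbb{R}_{\ge0}^E$, $s,t\in V$ joined by a directed path, budget $0<\gamma\le\min_eC(e)$. User paths $P=\{p_1,\dots,p_k\}$ are directed paths (edge sets, not necessarily disjoint) with initial values $\lambda_i\ge0$, $\sum_{i:e\in p_i}\lambda_i\le C(e)$. For $A\subseteq E$ let $\tilde C_A(e)=C(e)-\gamma\mathbf{1}_{\{e\in A\}}$; $T(A,P)$ is the optimal value of: maximize $\sum_i\tilde\lambda_i$ s.t. $\sum_{i:e\in p_i}\tilde\lambda_i\le\tilde C_A(e)$ for all $e$, $0\le\tilde\lambda_i\le\lambda_i$; $\Lambda(A,P)=\sum_i\lambda_i-T(A,P)$. $E_1$ (resp. $E_2$) is the set of edges on exactly one (resp. at least two) user paths. $\tilde\lambda^{(1)}_{iA}=\min(\lambda_i,\min_{e\in p_i\cap E_1}\tilde C_A(e))$, $\tilde\lambda^{(2)}_{iA}=\tilde\lambda^{(1)}_{iA}\prod_{e\in p_i\cap E_2,\ \tilde C_A(e)\le\sum_{j:e\in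 p_j}\lambda_j}\frac{\tilde C_A(e)}{\sum_{j:e\in p_j}\lambda_j}$, $\bar\Lambda(A,P)=\sum_i\lambda_i-\sum_i\tilde\lambda^{(2)}_{iA}$. Recursive Greedy algorithm for a set function $F$ on $2^E$, with $F_X(A)=F(A\cup X)-F(X)$: $RG(u_1,u_2,X,i)$ lets $S$ be a shortest (fewest edges) $u_1$-$u_2$ path, returns "infeasible" if none exists, returns $S$ if $i=0$, and otherwise sets $best:=S$, $r:=F_X(S)$ and for every $v\in V$ computes $Q_1=RG(u_1,v,X,i-1)$, then $Q_2=RG(v,u_2,X\cup Q_1,i-1)$ (skipping $v$ if infeasible), updating $best:=Q_1\cup Q_2$, $r:=F_X(Q_1\cup Q_2)$ whenever $F_X(Q_1\cup Q_2)>r$; it returns $best$. The output is $RG(s,t,\emptyset,I)$. The Extended Recursive Greedy algorithm is this algorithm run with $F=\bar\Lambda(\cdot,P)$. *)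

theory Defs
  imports Complex_Main
begin

type_synonym 'v edge = "'v \<times> 'v"

definition is_vpath :: "'v edge set \<Rightarrow> 'v list \<Rightarrow> bool" where
  "is_vpath E xs \<longleftrightarrow> xs \<noteq> [] \<and> distinct xs \<and> (\<forall>e \<in> set (zip xs (tl xs)). e \<in> E)"

definition path_edges :: "'v list \<Rightarrow> 'v edge set" where
  "path_edges xs = set (zip xs (tl xs))"

definition st_path :: "'v edge set \<Rightarrow> 'v \<Rightarrow> 'v \<Rightarrow> 'v edge set \<Rightarrow> bool" where
  "st_path E u v S \<longleftrightarrow> (\<exists>xs. is_vpath E xs \<and> hd xs = u \<and> last xs = v \<and> S = path_edges xs)"

definition is_dpath :: "'v edge set \<Rightarrow> 'v edge set \<Rightarrow> bool" where
  "is_dpath E S \<longleftrightarrow> (\<exists>u v. st_path E u v S)"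

text \<open>A shortest-path oracle: returns some fewest-edge u-v path, or None if none exists.
  Ties are broken arbitrarily; the theorem quantifies over all such oracles.\<close>
definition valid_sp :: "'v edge set \<Rightarrow> ('v \<Rightarrow> 'v \<Rightarrow> 'v edge set option) \<Rightarrow> bool" where
  "valid_sp E sp \<longleftrightarrow> (\<forall>u v.
     (sp u v = None \<longleftrightarrow> \<not> (\<exists>S. st_path E u v S)) \<and>
     (\<forall>S. sp u v = Some S \<longrightarrow> st_path E u v S \<and> (\<forall>S'. st_path E u v S' \<longrightarrow> card S \<le> card S')))"

definition Ct :: "('v edge \<Rightarrow> real) \<Rightarrow> real \<Rightarrow> 'v edge set \<Rightarrow> 'v edge \<Rightarrow> real" where
  "Ct C \<gamma> A e = C e - (if e \<in> A then \<gamma> else 0)"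

definition users :: "(nat \<Rightarrow> 'v edge set) \<Rightarrow> nat \<Rightarrow> 'v edge \<Rightarrow> nat set" where
  "users p k e = {i. i < k \<and> e \<in> p i}"

definition load :: "(nat \<Rightarrow> 'v edge set) \<Rightarrow> (nat \<Rightarrow> real) \<Rightarrow> nat \<Rightarrow> 'v edge \<Rightarrow> real" where
  "load p lam k e = (\<Sum>j \<in> users p k e. lam j)"

definition T_opt :: "'v edge set \<Rightarrow> ('v edge \<Rightarrow> real) \<Rightarrow> real \<Rightarrow> (nat \<Rightarrow> 'v edge set)
    \<Rightarrow> (nat \<Rightarrow> real) \<Rightarrow> nat \<Rightarrow> 'v edge set \<Rightarrow> real" where
  "T_opt E C \<gamma> p lam k A = Sup {(\<Sum>i<k. l i) | l.
      (\<forall>i<k. 0 \<le> l i \<and> l i \<le> lam i) \<and>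
      (\<forall>e \<in> E. (\<Sum>i \<in> users p k e. l i) \<le> Ct C \<gamma> A e)}"

definition Lam :: "'v edge set \<Rightarrow> ('v edge \<Rightarrow> real) \<Rightarrow> real \<Rightarrow> (nat \<Rightarrow> 'v edge set)
    \<Rightarrow> (nat \<Rightarrow> real) \<Rightarrow> nat \<Rightarrow> 'v edge set \<Rightarrow> real" where
  "Lam E C \<gamma> p lam k A = (\<Sum>i<k. lam i) - T_opt E C \<gamma> p lam k A"

definition E1 :: "'v edge set \<Rightarrow> (nat \<Rightarrow> 'v edge set) \<Rightarrow> nat \<Rightarrow> 'v edge set" where
  "E1 E p k = {e \<in> E. card (users p k e) = 1}"

definition E2 :: "'v edge set \<Rightarrow> (nat \<Rightarrow> 'v edge set) \<Rightarrow> nat \<Rightarrow> 'v edge set" where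
  "E2 E p k = {e \<in> E. card (users p k e) \<ge> 2}"

text \<open>min over the empty set is +infinity, hence the case distinction.\<close>
definition lam1 :: "'v edge set \<Rightarrow> ('v edge \<Rightarrow> real) \<Rightarrow> real \<Rightarrow> (nat \<Rightarrow> 'v edge set)
    \<Rightarrow> (nat \<Rightarrow> real) \<Rightarrow> nat \<Rightarrow> nat \<Rightarrow> 'v edge set \<Rightarrow> real" where
  "lam1 E C \<gamma> p lam k i A =
     (if p i \<inter> E1 E p k = {} then lam i
      else min (lam i) (Min (Ct C \<gamma> A ` (p i \<inter> E1 E p k))))"

definition lam2 :: "'v edge set \<Rightarrow> ('v edge \<Rightarrow> real) \<Rightarrow> real \<Rightarrow> (nat \<Rightarrow> 'v edge set)
    \<Rightarrow> (nat \<Rightarrow> real) \<Rightarrow> nat \<Rightarrow> nat \<Rightarrow> 'v edge set \<Rightarrow> real" where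
  "lam2 E C \<gamma> p lam k i A =
     lam1 E C \<gamma> p lam k i A *
     (\<Prod>e \<in> {e \<in> p i \<inter> E2 E p k. Ct C \<gamma> A e \<le> load p lam k e}.
        Ct C \<gamma> A e / load p lam k e)"

definition Lbar :: "'v edge set \<Rightarrow> ('v edge \<Rightarrow> real) \<Rightarrow> real \<Rightarrow> (nat \<Rightarrow> 'v edge set)
    \<Rightarrow> (nat \<Rightarrow> real) \<Rightarrow> nat \<Rightarrow> 'v edge set \<Rightarrow> real" where
  "Lbar E C \<gamma> p lam k A = (\<Sum>i<k. lam i) - (\<Sum>i<k. lam2 E C \<gamma> p lam k i A)"

text \<open>RG F sp vs i u1 u2 X: sp is the shortest path oracle, vs an enumeration of V
  (the order in which the loop "for every v in V" visits the vertices).\<close>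
primrec RG :: "('v edge set \<Rightarrow> real) \<Rightarrow> ('v \<Rightarrow> 'v \<Rightarrow> 'v edge set option) \<Rightarrow> 'v list
    \<Rightarrow> nat \<Rightarrow> 'v \<Rightarrow> 'v \<Rightarrow> 'v edge set \<Rightarrow> 'v edge set option" where
  "RG F sp vs 0 u1 u2 X = sp u1 u2"
| "RG F sp vs (Suc i) u1 u2 X =
     (case sp u1 u2 of
        None \<Rightarrow> None
      | Some S \<Rightarrow> Some (fst (foldl
          (\<lambda>(best, r) v.
             (case RG F sp vs i u1 v X of
                None \<Rightarrow> (best, r)
              | Some Q1 \<Rightarrow>
                  (case RG F sp vs i v u2 (X \<union> Q1) of
                     None \<Rightarrow> (best, r)
                   | Some Q2 \<Rightarrow>
                       (if F ((Q1 \<union> Q2) \<union> X) - F X > r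
                        then (Q1 \<union> Q2, F ((Q1 \<union> Q2) \<union> X) - F X)
                        else (best, r)))))
          (S, F (S \<union> X) - F X) vs)))"

end

theory Submission
  imports Defs
begin


lemma path_edges_append:
  "path_edges (xs @ ys) = path_edges xs \<union> path_edges ys \<union>
     (if xs \<noteq> [] \<and> ys \<noteq> [] then {(last xs, hd ys)} else {})"
proof (induction xs)
  case Nil then show ?case by (simp add: path_edges_def)
next
  case (Cons a xs)
  show ?case
  proof (cases xs)
    case Nil then show ?thesis by (cases ys) (auto simp: path_edges_def)
  next
    case (Cons b zs)
    have "path_edges (a # xs @ ys) = insert (a, hd (xs @ ys)) (path_edges (xs @ ys))"
      using Cons by (simp add: path_edges_def)
    moreover have "path_edges (a # xs) = insert (a, hd xs) (path_edges xs)"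
      using Cons by (simp add: path_edges_def)
    ultimately show ?thesis using Cons.IH Cons by auto
  qed
qed

lemma path_edges_Cons2: "path_edges (a # b # xs) = insert (a, b) (path_edges (b # xs))"
  by (simp add: path_edges_def)

lemma card_path_edges: "distinct xs \<Longrightarrow> card (path_edges xs) = length xs - 1"
proof (induction xs)
  case Nil then show ?case by (simp add: path_edges_def)
next
  case (Cons a xs)
  show ?case
  proof (cases xs)
    case Nil then show ?thesis by (simp add: path_edges_def)
  next
    case (Cons b zs)
    have "(a, b) \<notin> path_edges xs"
      using Cons.prems Cons by (auto simp: path_edges_def dest: set_zip_leftD)
    moreover have "finite (path_edges xs)" by (simp add: path_edges_def)
    ultimately show ?thesis using Cons Cons.IH Cons.prems by (simp add: path_edges_Cons2)
  qed
qed

lemma st_path_finite: "st_path E u v S \<Longrightarrow> finite S"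
  by (auto simp: st_path_def path_edges_def)

lemma st_path_sub: "st_path E u v S \<Longrightarrow> S \<subseteq> E"
  by (auto simp: st_path_def path_edges_def is_vpath_def)

lemma st_path_same: "st_path E u u S \<Longrightarrow> S = {}"
proof -
  assume "st_path E u u S"
  then obtain xs where xs: "is_vpath E xs" "hd xs = u" "last xs = u" "S = path_edges xs"
    by (auto simp: st_path_def)
  have d: "distinct xs" "xs \<noteq> []" using xs by (auto simp: is_vpath_def)
  have "xs ! 0 = xs ! (length xs - 1)" using xs(2,3) d(2) by (simp add: hd_conv_nth last_conv_nth)
  then have "0 = length xs - 1" using d by (simp add: nth_eq_iff_index_eq)
  then have "length xs \<le> 1" by simp
  then show ?thesis using xs by (cases xs) (auto simp: path_edges_def)
qed

lemma st_path_card_le1: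
  assumes "st_path E u v S" "card S \<le> 1"
  shows "S = (if u = v then {} else {(u, v)})"
proof -
  obtain xs where xs: "is_vpath E xs" "hd xs = u" "last xs = v" "S = path_edges xs"
    using assms by (auto simp: st_path_def)
  have d: "distinct xs" "xs \<noteq> []" using xs by (auto simp: is_vpath_def)
  have "length xs \<le> 2" using card_path_edges[OF d(1)] assms(2) xs(4) by simp
  then consider "xs = [u]" | "xs = [u, v]"
    using d xs(2,3) by (cases xs; cases "tl xs"; auto)
  then show ?thesis using d xs(2,3,4) by cases (auto simp: path_edges_def)
qed

lemma vpath_vertex_in_edge:
  assumes "is_vpath E xs" "length xs \<ge> 2" "x \<in> set xs"
  shows "x \<in> fst ` E \<union> snd ` E"
proof -
  obtain n where n: "n < length xs" "xs ! n = x" using assms(3) by (metis in_set_conv_nth)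
  show ?thesis
  proof (cases "n + 1 < length xs")
    case True
    have "(xs ! n, xs ! (n+1)) \<in> set (zip xs (tl xs))"
      using True by (auto simp: in_set_zip nth_tl intro!: exI[of _ n])
    then show ?thesis using assms(1) n by (force simp: is_vpath_def)
  next
    case False
    then have "n - 1 + 1 < length xs" "n = n - 1 + 1" using assms(2) n by auto
    then have "(xs ! (n-1), xs ! n) \<in> set (zip xs (tl xs))"
      by (auto simp: in_set_zip nth_tl intro!: exI[of _ "n-1"])
    then show ?thesis using assms(1) n by (force simp: is_vpath_def)
  qed
qed

lemma vpath_rtrancl:
  "is_vpath E xs \<Longrightarrow> i \<le> j \<Longrightarrow> j < length xs \<Longrightarrow> (xs ! i, xs ! j) \<in> E\<^sup>*"
proof (induction j)
  case 0 then show ?case by simp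
next
  case (Suc j)
  show ?case
  proof (cases "i = Suc j")
    case True then show ?thesis by simp
  next
    case False
    then have "(xs ! i, xs ! j) \<in> E\<^sup>*" using Suc by auto
    moreover have "(xs ! j, xs ! Suc j) \<in> set (zip xs (tl xs))"
      using Suc.prems by (auto simp: in_set_zip nth_tl intro!: exI[of _ j])
    then have "(xs ! j, xs ! Suc j) \<in> E" using Suc.prems by (auto simp: is_vpath_def)
    ultimately show ?thesis by auto
  qed
qed

lemma vpath_trancl:
  "is_vpath E xs \<Longrightarrow> i < j \<Longrightarrow> j < length xs \<Longrightarrow> (xs ! i, xs ! j) \<in> E\<^sup>+"
proof -
  assume a: "is_vpath E xs" "i < j" "j < length xs"
  have "(xs ! i, xs ! (j-1)) \<in> E\<^sup>*" using a by (intro vpath_rtrancl) auto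
  moreover have "(xs ! (j-1), xs ! (j - 1 + 1)) \<in> set (zip xs (tl xs))"
    using a by (auto simp: in_set_zip nth_tl intro!: exI[of _ "j-1"])
  then have "(xs ! (j-1), xs ! j) \<in> E" using a by (auto simp: is_vpath_def)
  ultimately show ?thesis by auto
qed

lemma st_path_concat:
  assumes ac: "acyclic E" and p1: "st_path E a b Q1" and p2: "st_path E b c Q2"
  shows "st_path E a c (Q1 \<union> Q2)"
proof -
  obtain xs where xs: "is_vpath E xs" "hd xs = a" "last xs = b" "Q1 = path_edges xs"
    using p1 by (auto simp: st_path_def)
  obtain ys where ys: "is_vpath E ys" "hd ys = b" "last ys = c" "Q2 = path_edges ys"
    using p2 by (auto simp: st_path_def)
  have ne: "xs \<noteq> []" "ys \<noteq> []" using xs ys by (auto simp: is_vpath_def)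
  define zs where "zs = butlast xs @ ys"
  have xs_eq: "xs = butlast xs @ [b]" using ne xs(3) by (metis append_butlast_last_id)
  have pe: "path_edges zs = Q1 \<union> Q2"
  proof (cases "butlast xs = []")
    case True
    then have "xs = [b]" using xs_eq by simp
    then show ?thesis using xs ys by (simp add: zs_def True path_edges_def)
  next
    case False
    have "Q1 = path_edges (butlast xs) \<union> {(last (butlast xs), b)}"
      using xs(4) xs_eq False path_edges_append[of "butlast xs" "[b]"]
      by (simp add: path_edges_def)
    then show ?thesis using path_edges_append[of "butlast xs" ys] False ne ys(2,4)
      by (auto simp: zs_def)
  qed
  have dist: "distinct zs"
  proof -
    have "distinct (butlast xs)" "distinct ys" using xs ys by (auto simp: is_vpath_def distinct_butlast)
    moreover have "set (butlast xs) \<inter> set ys = {}"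
    proof (rule ccontr)
      assume "set (butlast xs) \<inter> set ys \<noteq> {}"
      then obtain x where x1: "x \<in> set (butlast xs)" and x2: "x \<in> set ys" by auto
      obtain i where i: "i < length (butlast xs)" "butlast xs ! i = x"
        using x1 by (metis in_set_conv_nth)
      have "i < length xs - 1" using i by simp
      then have "xs ! i = x" using i by (simp add: nth_butlast)
      then have r1: "(x, b) \<in> E\<^sup>+"
        using vpath_trancl[OF xs(1), of i "length xs - 1"] i ne xs(3)
        by (simp add: last_conv_nth)
      obtain j where j: "j < length ys" "ys ! j = x" using x2 by (metis in_set_conv_nth)
      have "(b, x) \<in> E\<^sup>*" using vpath_rtrancl[OF ys(1), of 0 j] j ys(2) ne
        by (simp add: hd_conv_nth)
      with r1 have "(x, x) \<in> E\<^sup>+" by auto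
      then show False using ac by (auto simp: acyclic_def)
    qed
    ultimately show ?thesis by (simp add: zs_def)
  qed
  have "is_vpath E zs"
  proof -
    have "set (zip zs (tl zs)) = path_edges zs" by (simp add: path_edges_def)
    moreover have "Q1 \<subseteq> E" "Q2 \<subseteq> E" using xs ys by (auto simp: is_vpath_def path_edges_def)
    ultimately show ?thesis using pe dist ne by (auto simp: is_vpath_def zs_def)
  qed
  moreover have "hd zs = a"
    using xs ne xs_eq by (cases "butlast xs") (auto simp: zs_def ys(2))
  moreover have "last zs = c" using ys ne by (simp add: zs_def)
  ultimately show ?thesis using pe by (auto simp: st_path_def)
qed



lemma foldl_inv:
  fixes g :: "'b \<times> real \<Rightarrow> 'c \<Rightarrow> 'b \<times> real" and vs :: "'c list"
  assumes "\<And>b r v. Pr (b, r) \<Longrightarrow> Pr (g (b, r) v) \<and> snd (g (b, r) v) \<ge> r"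
    and "Pr x"
  shows "Pr (foldl g x vs) \<and> snd (foldl g x vs) \<ge> snd x"
  using assms(2)
proof (induction vs arbitrary: x)
  case Nil then show ?case by simp
next
  case (Cons v vs)
  obtain b r where x: "x = (b, r)" by fastforce
  have "Pr (g x v)" "snd (g x v) \<ge> snd x" using assms(1) Cons.prems x by auto
  then show ?case using Cons.IH[of "g x v"] by auto
qed

lemma foldl_cand:
  fixes g :: "'b \<times> real \<Rightarrow> 'c \<Rightarrow> 'b \<times> real" and vs :: "'c list"
  assumes "\<And>b r v. Pr (b, r) \<Longrightarrow> Pr (g (b, r) v) \<and> snd (g (b, r) v) \<ge> r"
    and "w \<in> set vs" and "\<And>b r. Pr (b, r) \<Longrightarrow> snd (g (b, r) w) \<ge> c"
    and "Pr x"
  shows "snd (foldl g x vs) \<ge> c"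
  using assms(2,4)
proof (induction vs arbitrary: x)
  case Nil then show ?case by simp
next
  case (Cons v vs)
  obtain b r where x: "x = (b, r)" by fastforce
  have P: "Pr (g x v)" using assms(1) Cons.prems x by auto
  show ?case
  proof (cases "w = v")
    case True
    have "snd (g x v) \<ge> c" using assms(3) Cons.prems x True by auto
    moreover have "snd (foldl g (g x v) vs) \<ge> snd (g x v)" using foldl_inv[where g=g and vs=vs, OF assms(1) P] by auto
    ultimately show ?thesis by simp
  next
    case False
    then show ?thesis using Cons P by auto
  qed
qed

locale rgset =
  fixes V :: "'v set" and E :: "'v edge set" and sp and vs :: "'v list"
    and F :: "'v edge set \<Rightarrow> real"
  assumes EV: "E \<subseteq> V \<times> V" and dag: "acyclic E" and sp: "valid_sp E sp"
    and vs: "set vs = V"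
    and mono: "\<And>A B. A \<subseteq> B \<Longrightarrow> F A \<le> F B"
    and submod: "\<And>A B. F (A \<union> B) + F (A \<inter> B) \<le> F A + F B"
begin

lemma sp_some: "st_path E u v P \<Longrightarrow> \<exists>S. sp u v = Some S \<and> st_path E u v S \<and> card S \<le> card P"
  using sp unfolding valid_sp_def by (metis option.exhaust)

lemma sp_sound: "sp u v = Some S \<Longrightarrow> st_path E u v S"
  using sp unfolding valid_sp_def by blast

lemma RG_sound: "RG F sp vs i u1 u2 X = Some Q \<Longrightarrow> st_path E u1 u2 Q"
proof (induction i arbitrary: u1 u2 X Q)
  case 0 then show ?case by (simp add: sp_sound)
next
  case (Suc i)
  define g where "g = (\<lambda>(best, r) v.
             (case RG F sp vs i u1 v X of
                None \<Rightarrow> (best, r)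
              | Some Q1 \<Rightarrow>
                  (case RG F sp vs i v u2 (X \<union> Q1) of
                     None \<Rightarrow> (best, r)
                   | Some Q2 \<Rightarrow>
                       (if F ((Q1 \<union> Q2) \<union> X) - F X > r
                        then (Q1 \<union> Q2, F ((Q1 \<union> Q2) \<union> X) - F X)
                        else (best, r)))))"
  obtain S where S: "sp u1 u2 = Some S" using Suc.prems by (cases "sp u1 u2") auto
  have Q: "Q = fst (foldl g (S, F (S \<union> X) - F X) vs)"
    using Suc.prems S by (simp add: g_def)
  let ?Pr = "\<lambda>(b::'v edge set, r::real). st_path E u1 u2 b"
  have step: "?Pr (g (b, r) v) \<and> snd (g (b, r) v) \<ge> r" if "?Pr (b, r)" for b r v
  proof -
    show ?thesis
    proof (cases "RG F sp vs i u1 v X")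
      case None then show ?thesis using that by (simp add: g_def)
    next
      case (Some Q1)
      show ?thesis
      proof (cases "RG F sp vs i v u2 (X \<union> Q1)")
        case None then show ?thesis using that Some by (simp add: g_def)
      next
        case (Some Q2)
        have "st_path E u1 u2 (Q1 \<union> Q2)"
          using st_path_concat[OF dag Suc.IH[OF \<open>RG F sp vs i u1 v X = Some Q1\<close>] Suc.IH[OF Some]] .
        then show ?thesis using that Some \<open>RG F sp vs i u1 v X = Some Q1\<close> by (simp add: g_def)
      qed
    qed
  qed
  have "?Pr (S, F (S \<union> X) - F X)" using sp_sound[OF S] by simp
  from foldl_inv[of ?Pr g, OF step this, of vs] show ?case using Q
    by (cases "foldl g (S, F (S \<union> X) - F X) vs") auto
qed

lemma RG_main:
  "st_path E u1 u2 P \<Longrightarrow> card P \<le> 2 ^ j \<Longrightarrow> j \<le> i \<Longrightarrow>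
   \<exists>Q. RG F sp vs i u1 u2 X = Some Q \<and> F (P \<union> X) - F X \<le> (real j + 1) * (F (Q \<union> X) - F X)"
proof (induction i arbitrary: u1 u2 X P j)
  case 0
  obtain S where S: "sp u1 u2 = Some S" "st_path E u1 u2 S" "card S \<le> card P"
    using sp_some[OF 0(1)] by blast
  have "S = P" using st_path_card_le1[OF S(2)] st_path_card_le1[OF 0(1)] 0 S(3) by simp
  then show ?case using S 0 by simp
next
  case (Suc i)
  define g where "g = (\<lambda>(best, r) v.
             (case RG F sp vs i u1 v X of
                None \<Rightarrow> (best, r)
              | Some Q1 \<Rightarrow>
                  (case RG F sp vs i v u2 (X \<union> Q1) of
                     None \<Rightarrow> (best, r)
                   | Some Q2 \<Rightarrow>
                       (if F ((Q1 \<union> Q2) \<union> X) - F X > r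
                        then (Q1 \<union> Q2, F ((Q1 \<union> Q2) \<union> X) - F X)
                        else (best, r)))))"
  obtain S where S: "sp u1 u2 = Some S" "st_path E u1 u2 S"
    using sp_some[OF Suc.prems(1)] by blast
  define x0 where "x0 = (S, F (S \<union> X) - F X)"
  have RGeq: "RG F sp vs (Suc i) u1 u2 X = Some (fst (foldl g x0 vs))"
    using S by (simp add: g_def x0_def)
  let ?Pr = "\<lambda>(b::'v edge set, r::real). r = F (b \<union> X) - F X"
  have step: "?Pr (g (b, r) v) \<and> snd (g (b, r) v) \<ge> r" if "?Pr (b, r)" for b r v
    using that by (auto simp: g_def split: option.splits)
  have P0: "?Pr x0" by (simp add: x0_def)
  obtain Q r where Qr: "foldl g x0 vs = (Q, r)" by fastforce
  have rQ: "r = F (Q \<union> X) - F X" "r \<ge> F (S \<union> X) - F X"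
    using foldl_inv[of ?Pr g, OF step P0, of vs] Qr by (auto simp: x0_def)
  have r0: "r \<ge> 0" using rQ mono[of X "S \<union> X"] by auto
  have cand: "r \<ge> F ((Q1 \<union> Q2) \<union> X) - F X"
    if w: "w \<in> V" and q1: "RG F sp vs i u1 w X = Some Q1" and q2: "RG F sp vs i w u2 (X \<union> Q1) = Some Q2"
    for w Q1 Q2
  proof -
    have hc: "\<And>b r. ?Pr (b, r) \<Longrightarrow> snd (g (b, r) w) \<ge> F ((Q1 \<union> Q2) \<union> X) - F X"
      using q1 q2 by (auto simp: g_def)
    have wv: "w \<in> set vs" using w vs by simp
    from foldl_cand[where g=g and vs=vs and w=w, OF step wv hc P0] show ?thesis using Qr by auto
  qed
  show ?case
  proof (cases "P = {}")
    case True
    then show ?thesis using RGeq Qr rQ r0 by auto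
  next
    case Pne: False
    obtain xs where xs: "is_vpath E xs" "hd xs = u1" "last xs = u2" "P = path_edges xs"
      using Suc.prems(1) by (auto simp: st_path_def)
    have dxs: "distinct xs" "xs \<noteq> []" using xs by (auto simp: is_vpath_def)
    have cardP: "card P = length xs - 1" using card_path_edges[OF dxs(1)] xs(4) by simp
    have len2: "length xs \<ge> 2"
    proof (rule ccontr)
      assume "\<not> length xs \<ge> 2"
      then have "card P = 0" using cardP by simp
      then show False using Pne st_path_finite[OF Suc.prems(1)] by simp
    qed
    have inV: "x \<in> V" if "x \<in> set xs" for x
      using vpath_vertex_in_edge[OF xs(1) len2 that] EV by auto
    show ?thesis
    proof (cases "j \<le> i")
      case True
      obtain Q1 where Q1: "RG F sp vs i u1 u2 X = Some Q1"
        "F (P \<union> X) - F X \<le> (real j + 1) * (F (Q1 \<union> X) - F X)"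
        using Suc.IH[OF Suc.prems(1,2) True] by blast
      have "\<exists>S. st_path E u2 u2 S" by (rule exI[of _ "{}"]) (auto simp: st_path_def is_vpath_def path_edges_def intro!: exI[of _ "[u2]"])
      then obtain Q2' where "st_path E u2 u2 Q2'" by blast
      then obtain Q2 where Q2: "RG F sp vs i u2 u2 (X \<union> Q1) = Some Q2"
        using Suc.IH[of u2 u2 Q2' 0 "X \<union> Q1"] st_path_same by fastforce
      have "Q2 = {}" by (rule st_path_same[OF RG_sound[OF Q2]])
      moreover have "u2 \<in> V" using inV xs(3) dxs(2) by auto
      ultimately have "r \<ge> F (Q1 \<union> X) - F X" using cand[OF _ Q1(1) Q2] by simp
      then show ?thesis using RGeq Qr Q1(2) rQ by (auto intro: order_trans)
    next
      case False
      then have j: "j = Suc i" using Suc.prems(3) by simp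
      define n where "n = card P"
      define m where "m = n div 2"
      have n: "length xs = n + 1" using cardP len2 n_def by simp
      have m_lt: "m < length xs" using n m_def by simp
      define v where "v = xs ! m"
      define ys where "ys = take m xs"
      define zs where "zs = drop (Suc m) xs"
      have xs_split: "xs = ys @ v # zs"
        using m_lt by (simp add: ys_def zs_def v_def id_take_nth_drop)
      define P1 where "P1 = path_edges (ys @ [v])"
      define P2 where "P2 = path_edges (v # zs)"
      have PP: "P = P1 \<union> P2"
        using xs(4) xs_split path_edges_append[of ys "v # zs"] path_edges_append[of ys "[v]"]
        by (auto simp: P1_def P2_def path_edges_def)
      have dist1: "distinct (ys @ [v])" "distinct (v # zs)" using dxs(1) xs_split by auto
      have sub: "path_edges (ys @ [v]) \<subseteq> E" "path_edges (v # zs) \<subseteq> E"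
        using PP xs(1,4) by (auto simp: P1_def P2_def is_vpath_def path_edges_def)
      have p1: "st_path E u1 v P1"
        unfolding st_path_def
        apply (rule exI[of _ "ys @ [v]"])
        using dist1 sub xs(2) xs_split by (cases ys) (auto simp: is_vpath_def P1_def path_edges_def)
      have p2: "st_path E v u2 P2"
        unfolding st_path_def
        apply (rule exI[of _ "v # zs"])
        using dist1 sub xs(3) xs_split by (auto simp: is_vpath_def P2_def path_edges_def)
      have lys: "length ys = m" using m_lt by (simp add: ys_def)
      have lzs: "length zs = n - m" using n by (simp add: zs_def)
      have c1: "card P1 \<le> 2 ^ i"
        using card_path_edges[OF dist1(1)] lys Suc.prems(2) j n_def m_def by (simp add: P1_def)
      have c2: "card P2 \<le> 2 ^ i"
        using card_path_edges[OF dist1(2)] lzs Suc.prems(2) j n_def m_def by (simp add: P2_def)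
      obtain Q1 where Q1: "RG F sp vs i u1 v X = Some Q1"
        "F (P1 \<union> X) - F X \<le> (real i + 1) * (F (Q1 \<union> X) - F X)"
        using Suc.IH[OF p1 c1, of X] by auto
      obtain Q2 where Q2: "RG F sp vs i v u2 (X \<union> Q1) = Some Q2"
        "F (P2 \<union> (X \<union> Q1)) - F (X \<union> Q1) \<le> (real i + 1) * (F (Q2 \<union> (X \<union> Q1)) - F (X \<union> Q1))"
        using Suc.IH[OF p2 c2, of "X \<union> Q1"] by auto
      have vV: "v \<in> V" using inV xs_split by auto
      have rc: "r \<ge> F ((Q1 \<union> Q2) \<union> X) - F X" using cand[OF vV Q1(1) Q2(1)] .
      define a where "a = F (Q1 \<union> X) - F X"
      define c where "c = F ((Q1 \<union> Q2) \<union> X) - F X"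
      have a0: "a \<ge> 0" using mono[of X "Q1 \<union> X"] by (auto simp: a_def)
      have ca: "c \<ge> a" using mono[of "Q1 \<union> X" "(Q1 \<union> Q2) \<union> X"] by (auto simp: a_def c_def)
      have cdec: "c = a + (F (Q2 \<union> (X \<union> Q1)) - F (X \<union> Q1))"
        by (simp add: a_def c_def Un_ac)
      have m2: "F (P2 \<union> (X \<union> Q1)) \<ge> F (P2 \<union> X)" by (rule mono) auto
      have sm: "F (P \<union> X) + F X \<le> F (P1 \<union> X) + F (P2 \<union> X)"
      proof -
        have "F ((P1 \<union> X) \<union> (P2 \<union> X)) + F ((P1 \<union> X) \<inter> (P2 \<union> X)) \<le> F (P1 \<union> X) + F (P2 \<union> X)"
          by (rule submod)
        moreover have "F ((P1 \<union> X) \<inter> (P2 \<union> X)) \<ge> F X" by (rule mono) auto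
        moreover have "(P1 \<union> X) \<union> (P2 \<union> X) = P \<union> X" using PP by auto
        ultimately show ?thesis by simp
      qed
      have "F (P \<union> X) - F X \<le> (real i + 1) * a + (F (P2 \<union> X) - F X)"
        using sm Q1(2) by (simp add: a_def)
      also have "\<dots> \<le> (real i + 1) * a + (F (P2 \<union> (X \<union> Q1)) - F (X \<union> Q1)) + a"
        using m2 by (simp add: a_def Un_ac)
      also have "\<dots> \<le> (real i + 1) * a + (real i + 1) * (c - a) + a"
        using Q2(2) cdec by simp
      also have "\<dots> \<le> (real j + 1) * c"
        using j ca a0 by (simp add: algebra_simps)
      finally have calc: "F (P \<union> X) - F X \<le> (real j + 1) * c" .
      have mult: "(real j + 1) * c \<le> (real j + 1) * r" using rc by (simp add: c_def)
      have fin: "F (P \<union> X) - F X \<le> (real j + 1) * r" by (rule order_trans[OF calc mult])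
      show ?thesis using RGeq Qr rQ(1) fin by simp
    qed
  qed
qed

end


lemma Min_image_min:
  assumes "finite S" "S \<noteq> {}"
  shows "Min ((\<lambda>e. min (f e) (g e)) ` S) = min (Min (f ` S)) (Min (g ` S :: real set))"
  using assms
proof (induction S rule: finite_ne_induct)
  case (singleton x) then show ?case by simp
next
  case (insert x F)
  then show ?case by (simp add: min.assoc min.left_commute min.commute)
qed

lemma one_minus_prod_le:
  fixes c :: "'a \<Rightarrow> real"
  assumes "finite S" "\<forall>e\<in>S. 0 \<le> c e \<and> c e \<le> 1"
  shows "1 - prod c S \<le> (\<Sum>e\<in>S. 1 - c e)"
  using assms
proof (induction S rule: finite_induct)
  case empty then show ?case by simp
next
  case (insert x F)
  have p: "0 \<le> prod c F" "prod c F \<le> 1" using insert by (auto intro!: prod_nonneg prod_le_1)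
  have c: "0 \<le> c x" "c x \<le> 1" using insert by auto
  have "1 - c x * prod c F \<le> (1 - c x) + (1 - prod c F)"
    using mult_nonneg_nonneg[of "1 - c x" "1 - prod c F"] p c by (simp add: algebra_simps)
  then show ?case using insert by simp
qed

lemma key_ineq:
  fixes mA mB mU mI pA pB pU pI :: real
  assumes "0 \<le> mA" "0 \<le> mB" "mU = min mA mB" "mA \<le> mI" "mB \<le> mI"
    "0 \<le> pU" "pU \<le> pA" "pU \<le> pB" "pA \<le> pI" "pB \<le> pI" "pU * pI = pA * pB"
  shows "mA * pA + mB * pB \<le> mU * pU + mI * pI"
proof -
  have s: "pA + pB \<le> pI + pU"
  proof (cases "pI = 0")
    case True then show ?thesis using assms by simp
  next
    case False
    then have pos: "pI > 0" using assms by simp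
    have "0 \<le> (pI - pA) * (pI - pB)" using assms by simp
    then have "0 \<le> pI * (pI + pU - pA - pB)" using assms(11) by (simp add: algebra_simps)
    then show ?thesis using pos by (simp add: zero_le_mult_iff)
  qed
  have gen: "x * pA + y * pB \<le> x * pU + mI * pI"
    if "0 \<le> x" "x \<le> y" "y \<le> mI" "pA + pB \<le> pI + pU"
      "pU \<le> pA" "pB \<le> pI" "0 \<le> pU" for x y pA pB
  proof -
    have "x * (pA - pU) \<le> x * (pI - pB)" using that by (intro mult_left_mono) auto
    also have "\<dots> \<le> y * (pI - pB)" using that by (intro mult_right_mono) auto
    finally have "x * pA + y * pB \<le> x * pU + y * pI" by (simp add: algebra_simps)
    also have "y * pI \<le> mI * pI" using that assms by (intro mult_right_mono) auto
    finally show ?thesis by simp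
  qed
  show ?thesis
  proof (cases "mA \<le> mB")
    case True
    then show ?thesis using gen[of mA mB pA pB] assms s by auto
  next
    case False
    then show ?thesis using gen[of mB mA pB pA] assms s by (auto simp: add.commute)
  qed
qed

locale netw =
  fixes E :: "'v edge set" and C :: "'v edge \<Rightarrow> real" and \<gamma> :: real
    and p :: "nat \<Rightarrow> 'v edge set" and lam :: "nat \<Rightarrow> real" and k :: nat
  assumes finE: "finite E" and gpos: "0 < \<gamma>" and gle: "\<forall>e \<in> E. \<gamma> \<le> C e"
    and pE: "\<forall>i<k. p i \<subseteq> E" and lamnn: "\<forall>i<k. 0 \<le> lam i"
    and lamfeas: "\<forall>e \<in> E. load p lam k e \<le> C e"
begin

abbreviation "m i A \<equiv> lam1 E C \<gamma> p lam k i A"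
abbreviation "l2 i A \<equiv> lam2 E C \<gamma> p lam k i A"
definition "phi e x = (if x \<le> load p lam k e then x / load p lam k e else 1)"
definition "Pf i A = (\<Prod>e \<in> p i \<inter> E2 E p k. phi e (Ct C \<gamma> A e))"

lemma finite_users: "finite (users p k e)" by (simp add: users_def)

lemma load_nn: "0 \<le> load p lam k e"
  unfolding load_def by (rule sum_nonneg) (auto simp: users_def lamnn)

lemma Ct_nn: "e \<in> E \<Longrightarrow> 0 \<le> Ct C \<gamma> A e" using gle gpos by (force simp: Ct_def)
lemma Ct_anti: "A \<subseteq> B \<Longrightarrow> Ct C \<gamma> B e \<le> Ct C \<gamma> A e" using gpos by (auto simp: Ct_def)
lemma Ct_un: "Ct C \<gamma> (A \<union> B) e = min (Ct C \<gamma> A e) (Ct C \<gamma> B e)" using gpos by (auto simp: Ct_def)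
lemma Ct_int: "Ct C \<gamma> (A \<inter> B) e = max (Ct C \<gamma> A e) (Ct C \<gamma> B e)" using gpos by (auto simp: Ct_def)

lemma phi_bounds: "0 \<le> x \<Longrightarrow> 0 \<le> phi e x \<and> phi e x \<le> 1"
  using load_nn[of e] by (auto simp: phi_def divide_le_eq_1)

lemma phi_mono: "0 \<le> x \<Longrightarrow> x \<le> y \<Longrightarrow> phi e x \<le> phi e y"
  using load_nn[of e] by (auto simp: phi_def divide_le_eq_1 divide_right_mono)

lemma finite_pE2: "finite (p i \<inter> E2 E p k)" using finE by (auto simp: E2_def)
lemma pE2_sub: "p i \<inter> E2 E p k \<subseteq> E" by (auto simp: E2_def)

lemma lam2_eq: "l2 i A = m i A * Pf i A"
  unfolding lam2_def Pf_def phi_def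
  by (subst prod.inter_filter[OF finite_pE2, symmetric]) simp

lemma Pf_bounds: "0 \<le> Pf i A \<and> Pf i A \<le> 1"
proof -
  have "\<forall>e \<in> p i \<inter> E2 E p k. 0 \<le> phi e (Ct C \<gamma> A e) \<and> phi e (Ct C \<gamma> A e) \<le> 1"
    using pE2_sub[of i] by (intro ballI phi_bounds Ct_nn) auto
  then show ?thesis unfolding Pf_def by (auto intro!: prod_nonneg prod_le_1)
qed

lemma Pf_anti: "A \<subseteq> B \<Longrightarrow> Pf i B \<le> Pf i A"
  unfolding Pf_def
  by (rule prod_mono) (use phi_bounds Ct_nn pE2_sub phi_mono Ct_anti in blast)

lemma Pf_mult: "Pf i (A \<union> B) * Pf i (A \<inter> B) = Pf i A * Pf i B"
proof -
  have "\<And>e. phi e (Ct C \<gamma> (A \<union> B) e) * phi e (Ct C \<gamma> (A \<inter> B) e) =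
     phi e (Ct C \<gamma> A e) * phi e (Ct C \<gamma> B e)"
    by (simp add: Ct_un Ct_int min_def max_def)
  then show ?thesis unfolding Pf_def by (simp add: prod.distrib[symmetric])
qed

lemma finite_pE1: "finite (p i \<inter> E1 E p k)" using finE by (auto simp: E1_def)
lemma pE1_sub: "p i \<inter> E1 E p k \<subseteq> E" by (auto simp: E1_def)

lemma m_bounds: "i < k \<Longrightarrow> 0 \<le> m i A \<and> m i A \<le> lam i"
proof -
  assume i: "i < k"
  have "\<forall>e \<in> p i \<inter> E1 E p k. 0 \<le> Ct C \<gamma> A e"
    using pE1_sub[of i] by (intro ballI Ct_nn) auto
  then show ?thesis unfolding lam1_def using lamnn i finite_pE1
    by (auto simp: Min_ge_iff)
qed

lemma m_anti: "A \<subseteq> B \<Longrightarrow> m i B \<le> m i A"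
proof -
  assume "A \<subseteq> B"
  then have "\<forall>e. Ct C \<gamma> B e \<le> Ct C \<gamma> A e" using Ct_anti by blast
  then show ?thesis unfolding lam1_def using finite_pE1
    by (auto simp: Min_le_iff Min_ge_iff min_le_iff_disj intro: order_trans)
qed

lemma m_un: "m i (A \<union> B) = min (m i A) (m i B)"
proof (cases "p i \<inter> E1 E p k = {}")
  case True then show ?thesis by (simp add: lam1_def)
next
  case False
  have "Min (Ct C \<gamma> (A \<union> B) ` (p i \<inter> E1 E p k)) =
     min (Min (Ct C \<gamma> A ` (p i \<inter> E1 E p k))) (Min (Ct C \<gamma> B ` (p i \<inter> E1 E p k)))"
    unfolding Ct_un by (rule Min_image_min[OF finite_pE1 False])
  then show ?thesis using False by (simp add: lam1_def min.assoc min.left_commute min.commute)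
qed

lemma l2_anti: "i < k \<Longrightarrow> A \<subseteq> B \<Longrightarrow> l2 i B \<le> l2 i A"
  unfolding lam2_eq using m_bounds Pf_bounds m_anti Pf_anti
  by (meson mult_mono order_trans)

lemma l2_bounds: "i < k \<Longrightarrow> 0 \<le> l2 i A \<and> l2 i A \<le> lam i"
  unfolding lam2_eq using m_bounds[of i A] Pf_bounds[of i A]
  by (auto intro: mult_le_one mult_nonneg_nonneg simp: mult_le_cancel_left1 order_trans[OF mult_right_le_one_le])

lemma l2_super: "i < k \<Longrightarrow> l2 i A + l2 i B \<le> l2 i (A \<union> B) + l2 i (A \<inter> B)"
  unfolding lam2_eq
  apply (rule key_ineq)
  using m_bounds[of i] Pf_bounds[of i] m_un[of i A B] m_anti[of "A \<inter> B" A i] m_anti[of "A \<inter> B" B i]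
    Pf_anti[of "A" "A \<union> B" i] Pf_anti[of "B" "A \<union> B" i] Pf_anti[of "A \<inter> B" A i] Pf_anti[of "A \<inter> B" B i]
    Pf_mult[of i A B]
  by (auto simp: mult.commute)

abbreviation "FF \<equiv> Lbar E C \<gamma> p lam k"

lemma FF_mono: "A \<subseteq> B \<Longrightarrow> FF A \<le> FF B"
  unfolding Lbar_def by (auto intro!: sum_mono l2_anti)

lemma FF_submod: "FF (A \<union> B) + FF (A \<inter> B) \<le> FF A + FF B"
proof -
  have "(\<Sum>i<k. l2 i A) + (\<Sum>i<k. l2 i B) \<le> (\<Sum>i<k. l2 i (A \<union> B)) + (\<Sum>i<k. l2 i (A \<inter> B))"
    unfolding sum.distrib[symmetric] by (rule sum_mono) (simp add: l2_super)
  then show ?thesis unfolding Lbar_def by simp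
qed

lemma FF_empty_nn: "0 \<le> FF {}"
  unfolding Lbar_def using l2_bounds by (auto intro!: sum_mono)

end


context netw
begin

lemma users_sub: "users p k e \<subseteq> {..<k}" by (auto simp: users_def)

lemma users_eq: "users p k e = {i \<in> {..<k}. e \<in> p i}" by (auto simp: users_def)

lemma load_eq: "load p lam k e = (\<Sum>i<k. if e \<in> p i then lam i else 0)"
  unfolding load_def users_eq by (rule sum.inter_filter) simp

lemma l2_le_m: "i < k \<Longrightarrow> l2 i A \<le> m i A"
  unfolding lam2_eq using m_bounds[of i A] Pf_bounds[of i A]
  by (simp add: mult_left_le)

lemma m_le_Ct: "i < k \<Longrightarrow> e \<in> p i \<inter> E1 E p k \<Longrightarrow> m i A \<le> Ct C \<gamma> A e"
proof -
  assume a: "i < k" "e \<in> p i \<inter> E1 E p k"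
  then have "p i \<inter> E1 E p k \<noteq> {}" by auto
  then have "m i A = min (lam i) (Min (Ct C \<gamma> A ` (p i \<inter> E1 E p k)))" by (simp add: lam1_def)
  also have "\<dots> \<le> Min (Ct C \<gamma> A ` (p i \<inter> E1 E p k))" by simp
  also have "\<dots> \<le> Ct C \<gamma> A e" using a finite_pE1 by simp
  finally show ?thesis .
qed

lemma Pf_le_phi: "e \<in> p i \<inter> E2 E p k \<Longrightarrow> Pf i A \<le> phi e (Ct C \<gamma> A e)"
proof -
  assume e: "e \<in> p i \<inter> E2 E p k"
  have eE: "e \<in> E" using e pE2_sub by blast
  have "Pf i A = phi e (Ct C \<gamma> A e) * (\<Prod>x \<in> (p i \<inter> E2 E p k) - {e}. phi x (Ct C \<gamma> A x))"
    unfolding Pf_def using prod.remove[OF finite_pE2 e] by simp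
  moreover have "(\<Prod>x \<in> (p i \<inter> E2 E p k) - {e}. phi x (Ct C \<gamma> A x)) \<le> 1"
    using pE2_sub[of i] by (intro prod_le_1) (auto intro!: phi_bounds[THEN conjunct1] phi_bounds[THEN conjunct2] Ct_nn)
  moreover have "0 \<le> phi e (Ct C \<gamma> A e)" using phi_bounds Ct_nn[OF eE] by blast
  ultimately show ?thesis by (simp add: mult_left_le)
qed

lemma l2_feasible:
  assumes eE: "e \<in> E"
  shows "(\<Sum>i \<in> users p k e. l2 i A) \<le> Ct C \<gamma> A e"
proof -
  have fin: "finite (users p k e)" by (rule finite_users)
  consider "card (users p k e) = 0" | "card (users p k e) = 1" | "card (users p k e) \<ge> 2" by linarith
  then show ?thesis
  proof cases
    case 1
    then have "users p k e = {}" using fin by simp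
    then show ?thesis using Ct_nn[OF eE] by simp
  next
    case 2
    then obtain i where i: "users p k e = {i}" by (auto simp: card_Suc_eq)
    then have ik: "i < k" "e \<in> p i" by (auto simp: users_def)
    have "e \<in> E1 E p k" using eE 2 by (simp add: E1_def)
    then have "m i A \<le> Ct C \<gamma> A e" using m_le_Ct[OF ik(1)] ik by auto
    then show ?thesis using i l2_le_m[OF ik(1), of A] by simp
  next
    case 3
    then have e2: "e \<in> E2 E p k" using eE by (simp add: E2_def)
    show ?thesis
    proof (cases "Ct C \<gamma> A e \<le> load p lam k e")
      case True
      have "l2 j A \<le> lam j * phi e (Ct C \<gamma> A e)" if j: "j \<in> users p k e" for j
      proof -
        have jk: "j < k" "e \<in> p j" using j by (auto simp: users_def)
        have "l2 j A = m j A * Pf j A" by (rule lam2_eq)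
        also have "\<dots> \<le> lam j * phi e (Ct C \<gamma> A e)"
          using m_bounds[OF jk(1), of A] Pf_bounds[of j A] Pf_le_phi[of e j A] jk e2
          by (intro mult_mono) auto
        finally show ?thesis .
      qed
      then have "(\<Sum>i \<in> users p k e. l2 i A) \<le> (\<Sum>i \<in> users p k e. lam i * phi e (Ct C \<gamma> A e))"
        by (rule sum_mono)
      also have "\<dots> = load p lam k e * phi e (Ct C \<gamma> A e)"
        by (simp add: load_def sum_distrib_right)
      also have "\<dots> \<le> Ct C \<gamma> A e"
        using True Ct_nn[OF eE] by (cases "load p lam k e = 0") (auto simp: phi_def)
      finally show ?thesis .
    next
      case False
      have "(\<Sum>i \<in> users p k e. l2 i A) \<le> (\<Sum>i \<in> users p k e. lam i)"
        by (rule sum_mono) (use l2_bounds in \<open>auto simp: users_def\<close>)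
      then show ?thesis using False by (simp add: load_def)
    qed
  qed
qed

definition "feas A l \<longleftrightarrow> (\<forall>i<k. 0 \<le> l i \<and> l i \<le> lam i) \<and>
      (\<forall>e \<in> E. (\<Sum>i \<in> users p k e. l i) \<le> Ct C \<gamma> A e)"

lemma T_set: "T_opt E C \<gamma> p lam k A = Sup {(\<Sum>i<k. l i) | l. feas A l}"
  by (simp add: T_opt_def feas_def)

lemma feas_l2: "feas A (\<lambda>i. l2 i A)"
  using l2_bounds l2_feasible by (simp add: feas_def)

lemma bdd: "bdd_above {(\<Sum>i<k. l i) | l. feas A l}"
  by (rule bdd_aboveI[of _ "\<Sum>i<k. lam i"]) (auto simp: feas_def intro!: sum_mono)

lemma T_ge: "(\<Sum>i<k. l2 i A) \<le> T_opt E C \<gamma> p lam k A"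
  unfolding T_set by (rule cSup_upper[OF _ bdd]) (use feas_l2 in blast)

lemma Lam_le_FF: "Lam E C \<gamma> p lam k A \<le> FF A"
  using T_ge[of A] by (simp add: Lam_def Lbar_def)

lemma finE2: "finite (E2 E p k)" using finE by (simp add: E2_def)

lemma main_bound:
  fixes b :: nat
  assumes fl: "feas A l" and bnd: "\<forall>i<k. card (E2 E p k \<inter> p i) \<le> b"
  shows "(\<Sum>i<k. lam i) - (\<Sum>i<k. l2 i A) \<le> (real b + 1) * ((\<Sum>i<k. lam i) - (\<Sum>i<k. l i))"
proof -
  define d where "d i = lam i - l i" for i
  define w where "w e = 1 - phi e (Ct C \<gamma> A e)" for e
  have d0: "i < k \<Longrightarrow> 0 \<le> d i" for i using fl by (simp add: feas_def d_def)
  have g1: "lam i - m i A \<le> d i" if ik: "i < k" for i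
  proof -
    have "l i \<le> m i A"
    proof (cases "p i \<inter> E1 E p k = {}")
      case True then show ?thesis using fl ik by (simp add: lam1_def feas_def)
    next
      case False
      have "l i \<le> Ct C \<gamma> A e" if e: "e \<in> p i \<inter> E1 E p k" for e
      proof -
        have eE: "e \<in> E" and c1: "card (users p k e) = 1" using e by (auto simp: E1_def)
        have "i \<in> users p k e" using e ik by (simp add: users_def)
        then have H: "users p k e = {i}" using c1 by (metis card_1_singletonE singletonD)
        have "sum l (users p k e) \<le> Ct C \<gamma> A e" using fl eE by (simp add: feas_def)
        then show ?thesis using H by simp
      qed
      then have "l i \<le> Min (Ct C \<gamma> A ` (p i \<inter> E1 E p k))"
        using False finite_pE1 by (simp add: Min_ge_iff)
      then show ?thesis using False fl ik by (simp add: lam1_def feas_def)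
    qed
    then show ?thesis by (simp add: d_def)
  qed
  have g2: "m i A - l2 i A \<le> lam i * (\<Sum>e \<in> p i \<inter> E2 E p k. w e)" if ik: "i < k" for i
  proof -
    have ph: "\<forall>e\<in>p i \<inter> E2 E p k. 0 \<le> phi e (Ct C \<gamma> A e) \<and> phi e (Ct C \<gamma> A e) \<le> 1"
      using pE2_sub[of i] by (intro ballI phi_bounds Ct_nn) auto
    have "1 - Pf i A \<le> (\<Sum>e \<in> p i \<inter> E2 E p k. w e)"
      unfolding Pf_def w_def by (rule one_minus_prod_le[OF finite_pE2 ph])
    moreover have "0 \<le> 1 - Pf i A" using Pf_bounds[of i A] by simp
    ultimately have "m i A * (1 - Pf i A) \<le> lam i * (\<Sum>e \<in> p i \<inter> E2 E p k. w e)"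
      using m_bounds[OF ik, of A] by (intro mult_mono) (auto intro: order_trans)
    then show ?thesis by (simp add: lam2_eq algebra_simps)
  qed
  have g3: "(\<Sum>i<k. lam i * (\<Sum>e \<in> p i \<inter> E2 E p k. w e)) = (\<Sum>e \<in> E2 E p k. w e * load p lam k e)"
  proof -
    have "(\<Sum>i<k. lam i * (\<Sum>e \<in> p i \<inter> E2 E p k. w e)) =
        (\<Sum>i<k. \<Sum>e \<in> E2 E p k. if e \<in> p i then lam i * w e else 0)"
    proof (rule sum.cong[OF refl])
      fix i
      have "p i \<inter> E2 E p k = {e \<in> E2 E p k. e \<in> p i}" by auto
      then show "lam i * (\<Sum>e \<in> p i \<inter> E2 E p k. w e) = (\<Sum>e \<in> E2 E p k. if e \<in> p i then lam i * w e else 0)"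
        using finE2 by (simp add: sum.inter_filter sum_distrib_left if_distrib cong: if_cong)
    qed
    also have "\<dots> = (\<Sum>e \<in> E2 E p k. \<Sum>i<k. if e \<in> p i then lam i * w e else 0)"
      by (rule sum.swap)
    also have "\<dots> = (\<Sum>e \<in> E2 E p k. w e * load p lam k e)"
      by (rule sum.cong[OF refl]) (simp add: load_eq sum_distrib_left if_distrib mult.commute cong: if_cong)
    finally show ?thesis .
  qed
  have g4: "w e * load p lam k e \<le> (\<Sum>i \<in> users p k e. d i)" if e: "e \<in> E2 E p k" for e
  proof -
    have eE: "e \<in> E" using e by (simp add: E2_def)
    have sd: "(\<Sum>i \<in> users p k e. d i) = load p lam k e - (\<Sum>i \<in> users p k e. l i)"
      by (simp add: d_def load_def sum_subtractf)
    have feasE: "(\<Sum>i \<in> users p k e. l i) \<le> Ct C \<gamma> A e" using fl eE by (simp add: feas_def)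
    have dnn: "0 \<le> (\<Sum>i \<in> users p k e. d i)" by (rule sum_nonneg) (auto simp: users_def d0)
    show ?thesis
    proof (cases "Ct C \<gamma> A e \<le> load p lam k e \<and> load p lam k e \<noteq> 0")
      case True
      then have "w e * load p lam k e = load p lam k e - Ct C \<gamma> A e"
        by (simp add: w_def phi_def algebra_simps)
      then show ?thesis using sd feasE by simp
    next
      case False
      then have "w e * load p lam k e = 0" by (auto simp: w_def phi_def)
      then show ?thesis using dnn by linarith
    qed
  qed
  have g5: "(\<Sum>e \<in> E2 E p k. \<Sum>i \<in> users p k e. d i) \<le> real b * (\<Sum>i<k. d i)"
  proof -
    have "(\<Sum>e \<in> E2 E p k. \<Sum>i \<in> users p k e. d i) = (\<Sum>e \<in> E2 E p k. \<Sum>i<k. if e \<in> p i then d i else 0)"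
      unfolding users_eq by (intro sum.cong refl sum.inter_filter) simp
    also have "\<dots> = (\<Sum>i<k. \<Sum>e \<in> E2 E p k. if e \<in> p i then d i else 0)" by (rule sum.swap)
    also have "\<dots> = (\<Sum>i<k. d i * real (card (E2 E p k \<inter> p i)))"
    proof (rule sum.cong[OF refl])
      fix i
      have "E2 E p k \<inter> p i = {e \<in> E2 E p k. e \<in> p i}" by auto
      then show "(\<Sum>e \<in> E2 E p k. if e \<in> p i then d i else 0) = d i * real (card (E2 E p k \<inter> p i))"
        using finE2 by (simp add: sum.inter_filter[symmetric])
    qed
    also have "\<dots> \<le> (\<Sum>i<k. d i * real b)"
      using bnd d0 by (intro sum_mono mult_left_mono) auto
    finally show ?thesis by (simp add: sum_distrib_left mult.commute)
  qed
  have "(\<Sum>i<k. lam i) - (\<Sum>i<k. l2 i A) = (\<Sum>i<k. lam i - m i A) + (\<Sum>i<k. m i A - l2 i A)"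
    by (simp add: sum_subtractf)
  also have "\<dots> \<le> (\<Sum>i<k. d i) + (\<Sum>i<k. lam i * (\<Sum>e \<in> p i \<inter> E2 E p k. w e))"
    using g1 g2 by (intro add_mono sum_mono) auto
  also have "\<dots> \<le> (\<Sum>i<k. d i) + (\<Sum>e \<in> E2 E p k. \<Sum>i \<in> users p k e. d i)"
    unfolding g3 using g4 by (intro add_mono sum_mono) auto
  also have "\<dots> \<le> (\<Sum>i<k. d i) + real b * (\<Sum>i<k. d i)" using g5 by simp
  also have "\<dots> = (real b + 1) * ((\<Sum>i<k. lam i) - (\<Sum>i<k. l i))"
    by (simp add: d_def sum_subtractf algebra_simps)
  finally show ?thesis .
qed

lemma FF_le_Lam:
  fixes b :: nat
  assumes bnd: "\<forall>i<k. card (E2 E p k \<inter> p i) \<le> b"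
  shows "FF A \<le> (real b + 1) * Lam E C \<gamma> p lam k A"
proof -
  let ?S = "{(\<Sum>i<k. l i) | l. feas A l}"
  let ?L = "\<Sum>i<k. lam i"
  have "T_opt E C \<gamma> p lam k A \<le> ?L - FF A / (real b + 1)"
    unfolding T_set
  proof (rule cSup_least)
    show "?S \<noteq> {}" using feas_l2 by blast
  next
    fix x assume "x \<in> ?S"
    then obtain l where l: "feas A l" "x = (\<Sum>i<k. l i)" by blast
    have "FF A \<le> (real b + 1) * (?L - x)"
      using main_bound[OF l(1) bnd] l(2) by (simp add: Lbar_def)
    then have "FF A / (real b + 1) \<le> ?L - x" by (simp add: divide_le_eq mult.commute)
    then show "x \<le> ?L - FF A / (real b + 1)" by simp
  qed
  then have "FF A / (real b + 1) \<le> Lam E C \<gamma> p lam k A" by (simp add: Lam_def)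
  then show ?thesis by (simp add: divide_le_eq mult.commute)
qed

end


theorem theorem2:
  fixes V :: "'v set" and E :: "'v edge set" and C :: "'v edge \<Rightarrow> real"
    and s t :: 'v and \<gamma> :: real
    and k :: nat and p :: "nat \<Rightarrow> 'v edge set" and lam :: "nat \<Rightarrow> real"
    and sp :: "'v \<Rightarrow> 'v \<Rightarrow> 'v edge set option" and vs :: "'v list"
    and Estar :: "'v edge set" and I :: nat
  assumes finV: "finite V"
    and EV: "E \<subseteq> V \<times> V"
    and noloop: "\<forall>v. (v, v) \<notin> E"
    and dag: "acyclic E"
    and Cnn: "\<forall>e \<in> E. 0 \<le> C e"
    and sV: "s \<in> V" and tV: "t \<in> V" and st: "s \<noteq> t"
    and conn: "\<exists>S. st_path E s t S"
    and gpos: "0 < \<gamma>" and gle: "\<forall>e \<in> E. \<gamma> \<le> C e"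
    and upaths: "\<forall>i<k. is_dpath E (p i)"
    and lamnn: "\<forall>i<k. 0 \<le> lam i"
    and lamfeas: "\<forall>e \<in> E. load p lam k e \<le> C e"
    and sp: "valid_sp E sp"
    and vs: "distinct vs" "set vs = V"
    and Estar_path: "st_path E s t Estar"
    and Estar_opt: "\<forall>S. st_path E s t S \<longrightarrow> Lam E C \<gamma> p lam k S \<le> Lam E C \<gamma> p lam k Estar"
    and depth: "int I \<ge> \<lceil>log 2 (real (card Estar))\<rceil>"
  shows "\<exists>Ef. RG (Lbar E C \<gamma> p lam k) sp vs I s t {} = Some Ef \<and> st_path E s t Ef \<and>
     Lam E C \<gamma> p lam k Ef \<ge>
       1 / ((real (Max {card (E2 E p k \<inter> p i) | i. i < k}) + 1) *
            (real_of_int \<lceil>log 2 (real (card Estar))\<rceil> + 1)) * Lam E C \<gamma> p lam k Estar"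
proof -
  have finE: "finite E" using finite_subset[OF EV] finV by auto
  have pE: "\<forall>i<k. p i \<subseteq> E"
  proof (intro allI impI)
    fix i assume "i < k"
    then obtain u v where "st_path E u v (p i)" using upaths by (auto simp: is_dpath_def)
    then show "p i \<subseteq> E" by (rule st_path_sub)
  qed
  interpret N: netw E C \<gamma> p lam k
    using finE gpos gle pE lamnn lamfeas by unfold_locales auto
  interpret R: rgset V E sp vs "Lbar E C \<gamma> p lam k"
    using EV dag sp vs(2) N.FF_mono N.FF_submod by unfold_locales auto
  define d where "d = card Estar"
  have fin: "finite Estar" using st_path_finite[OF Estar_path] .
  have d1: "d \<ge> 1"
  proof (rule ccontr)
    assume "\<not> d \<ge> 1"
    then have c0: "card Estar = 0" using d_def by simp
    then have "card Estar \<le> 1" "Estar = {}" using fin by simp_all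
    then show False using st_path_card_le1[OF Estar_path] st by auto
  qed
  define L where "L = nat \<lceil>log 2 (real d)\<rceil>"
  have lg0: "log 2 (real d) \<ge> 0" using d1 by simp
  have Leq: "real_of_int \<lceil>log 2 (real d)\<rceil> = real L" using lg0 by (simp add: L_def)
  have LI: "L \<le> I" using depth nat_le_iff[of "\<lceil>log 2 (real d)\<rceil>" I] unfolding L_def d_def by blast
  have dL: "card Estar \<le> 2 ^ L"
  proof -
    have "real d = 2 powr log 2 (real d)" using d1 by simp
    also have "\<dots> \<le> 2 powr real L" using Leq by (intro powr_mono) (simp_all, linarith)
    also have "\<dots> = 2 ^ L" by (simp add: powr_realpow)
    finally have "real d \<le> real (2 ^ L)" by simp
    then show ?thesis unfolding d_def of_nat_le_iff by simp
  qed
  let ?F = "Lbar E C \<gamma> p lam k"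
  obtain Q where Q: "RG ?F sp vs I s t {} = Some Q"
    "?F (Estar \<union> {}) - ?F {} \<le> (real L + 1) * (?F (Q \<union> {}) - ?F {})"
    using R.RG_main[OF Estar_path dL LI, of "{}"] by blast
  have Qp: "st_path E s t Q" using R.RG_sound[OF Q(1)] .
  have F0: "0 \<le> ?F {}" by (rule N.FF_empty_nn)
  have FQ: "?F Estar \<le> (real L + 1) * ?F Q"
  proof -
    have "0 \<le> real L * ?F {}" using F0 by simp
    then show ?thesis using Q(2) by (simp add: algebra_simps)
  qed
  have FE: "Lam E C \<gamma> p lam k Estar \<le> ?F Estar" by (rule N.Lam_le_FF)
  show ?thesis
  proof (cases "k = 0")
    case True
    have "Lam E C \<gamma> p lam k A = 0" for A
    proof -
      have S: "{(\<Sum>i<k. l i) | l. N.feas A l} = {0}"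
        using True N.feas_l2[of A] by auto
      have "T_opt E C \<gamma> p lam k A = 0" unfolding N.T_set S by simp
      then show ?thesis by (simp add: Lam_def True)
    qed
    then show ?thesis using Q(1) Qp by simp
  next
    case False
    define b where "b = Max {card (E2 E p k \<inter> p i) | i. i < k}"
    have fs: "finite {card (E2 E p k \<inter> p i) | i. i < k}" by simp
    have bnd: "\<forall>i<k. card (E2 E p k \<inter> p i) \<le> b"
      unfolding b_def using fs by (auto intro!: Max_ge)
    have LQ: "?F Q \<le> (real b + 1) * Lam E C \<gamma> p lam k Q" by (rule N.FF_le_Lam[OF bnd])
    have pos: "0 < (real b + 1) * (real L + 1)" by simp
    have m1: "(real L + 1) * ?F Q \<le> (real L + 1) * ((real b + 1) * Lam E C \<gamma> p lam k Q)"
      using LQ by (intro mult_left_mono) auto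
    have eqK: "(real L + 1) * ((real b + 1) * Lam E C \<gamma> p lam k Q) =
       ((real b + 1) * (real L + 1)) * Lam E C \<gamma> p lam k Q" by (simp only: mult_ac)
    have "Lam E C \<gamma> p lam k Estar \<le> ((real b + 1) * (real L + 1)) * Lam E C \<gamma> p lam k Q"
      using order_trans[OF FE order_trans[OF FQ m1]] eqK by simp
    then have "Lam E C \<gamma> p lam k Estar / ((real b + 1) * (real L + 1)) \<le> Lam E C \<gamma> p lam k Q"
      using pos by (simp only: pos_divide_le_eq mult.commute)
    then have "1 / ((real b + 1) * (real L + 1)) * Lam E C \<gamma> p lam k Estar \<le> Lam E C \<gamma> p lam k Q"
      by simp
    then show ?thesis using Q(1) Qp Leq by (simp add: b_def d_def)
  qed
qed

end
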